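(* Let $M := \langle X \mid R\rangle$, and suppose that the set $Y := \{x\in X \mid \exists\, a,b,c\in\langle X\rangle \text{ such that } (axb,c)\in R \text{ or } (c,axb)\in R\}$ is finite. Then the following are equivalent: (1) There exists $a\in\langle X\rangle$ such that $\mathsf{Z}_M(a)$ is infinite. (2) There exists $a\in\langle X\rangle$ such that $\mathsf{L}_M(a)$ is infinite. (3) There exists $k\in\mathbb{N}$ such that $\mathcal{U}_k(M)$ is infinite (equivalently $\rho_k(M)=\infty$). (4) There exists $k\in\mathbb{N}$ such that $\mathcal{U}_n(M)$ is infinite (equivalently $\rho_n(M)=\infty$) for all $n\ge k$.
   Context: For a set $X$, $\langle X\rangle$ is the free monoid on $X$ (identity $1$); $M=\langle X\mid R\rangle$ is the monoid presented by generators $X$ and relations $R\subseteq\langle X\rangle\times\langle X\rangle$. $|a|$ is word length; $a=_M b$ means equal images in $M$. $\mathsf{Z}_M(a) := \{b\in\langle X\rangle : b=_M a\}$, $\mathsf{L}_M(a) := \{|b| : b\in\mathsf{Z}_M(a)\}$, $\mathcal{L}(M):=\{\mathsf{L}_M(a): a\in\langle X\rangle\}$. For $k\in\mathbb{N}$, $\mathcal{U}_k(M) := \bigcup\{L\in\mathcal{L}(M) : k\in L\}$ and, when nonempty, $\rho_k(M) := \sup\mathcal{U}_k(M)\in\mathbb{N}\cup\{\infty\}$. *)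

theory Defs
  imports Main
begin

text \<open>Words over the generating set X are lists in lists X; the free monoid is
  (lists X, @, []). A presentation is given by X and R with R \<subseteq> lists X \<times> lists X.\<close>

definition pres_step :: "('x list \<times> 'x list) set \<Rightarrow> ('x list \<times> 'x list) set" where
  "pres_step R = {(u @ l @ v, u @ r @ v) | u l r v. (l, r) \<in> R}"

text \<open>The monoid congruence generated by R: equal images in M.\<close>
definition pres_eq :: "('x list \<times> 'x list) set \<Rightarrow> 'x list \<Rightarrow> 'x list \<Rightarrow> bool" where
  "pres_eq R a b \<longleftrightarrow> (a, b) \<in> (pres_step R \<union> (pres_step R)\<inverse>)\<^sup>*"

definition factZ :: "'x set \<Rightarrow> ('x list \<times> 'x list) set \<Rightarrow> 'x list \<Rightarrow> 'x list set" where
  "factZ X R a = {b \<in> lists X. pres_eq R b a}"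

definition lenL :: "'x set \<Rightarrow> ('x list \<times> 'x list) set \<Rightarrow> 'x list \<Rightarrow> nat set" where
  "lenL X R a = length ` factZ X R a"

definition sysL :: "'x set \<Rightarrow> ('x list \<times> 'x list) set \<Rightarrow> nat set set" where
  "sysL X R = lenL X R ` lists X"

definition unionU :: "'x set \<Rightarrow> ('x list \<times> 'x list) set \<Rightarrow> nat \<Rightarrow> nat set" where
  "unionU X R k = \<Union> {L \<in> sysL X R. k \<in> L}"

end

theory Submission
  imports Defs
begin

definition relS :: "('x list \<times> 'x list) set \<Rightarrow> 'x set" where
  "relS R = (\<Union>p\<in>R. set (fst p) \<union> set (snd p))"

lemma pres_eq_refl: "pres_eq R a a"
  by (simp add: pres_eq_def)

lemma pres_eq_sym: "pres_eq R a b \<Longrightarrow> pres_eq R b a"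
  unfolding pres_eq_def
  by (meson sym_Un_converse sym_rtrancl symD)

lemma pres_eq_trans: "pres_eq R a b \<Longrightarrow> pres_eq R b c \<Longrightarrow> pres_eq R a c"
  unfolding pres_eq_def by (meson rtrancl_trans)

lemma step_set:
  assumes "(b, c) \<in> pres_step R \<union> (pres_step R)\<inverse>"
  shows "set c \<subseteq> set b \<union> relS R"
  using assms unfolding pres_step_def relS_def by force

lemma pres_eq_set:
  assumes "pres_eq R a b" shows "set b \<subseteq> set a \<union> relS R"
  using assms unfolding pres_eq_def
proof (induction rule: rtrancl_induct)
  case base then show ?case by simp
next
  case (step y z) then show ?case using step_set[OF step(2)] by blast
qed

lemma step_app:
  assumes "(b, c) \<in> pres_step R \<union> (pres_step R)\<inverse>"
  shows "(b @ w, c @ w) \<in> pres_step R \<union> (pres_step R)\<inverse>"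
  using assms
proof (elim UnE)
  assume "(b, c) \<in> pres_step R"
  then obtain u l r v where "b = u @ l @ v" "c = u @ r @ v" "(l, r) \<in> R" unfolding pres_step_def by blast
  then have "b @ w = u @ l @ (v @ w)" "c @ w = u @ r @ (v @ w)" "(l, r) \<in> R" by simp_all
  then show ?thesis unfolding pres_step_def by blast
next
  assume "(b, c) \<in> (pres_step R)\<inverse>"
  then obtain u l r v where "c = u @ l @ v" "b = u @ r @ v" "(l, r) \<in> R" unfolding pres_step_def by blast
  then have "c @ w = u @ l @ (v @ w)" "b @ w = u @ r @ (v @ w)" "(l, r) \<in> R" by simp_all
  then show ?thesis unfolding pres_step_def by blast
qed

lemma pres_eq_app:
  assumes "pres_eq R a b" shows "pres_eq R (a @ w) (b @ w)"
  using assms unfolding pres_eq_def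
proof (induction rule: rtrancl_induct)
  case base then show ?case by simp
next
  case (step y z) then show ?case
    using step_app[OF step(2)] by (meson rtrancl.rtrancl_into_rtrancl)
qed

lemma step_map:
  assumes "\<forall>x\<in>relS R. f x = x"
    and "(b, c) \<in> pres_step R \<union> (pres_step R)\<inverse>"
  shows "(map f b, map f c) \<in> pres_step R \<union> (pres_step R)\<inverse>"
proof -
  have ml: "map f l = l" "map f r = r" if "(l, r) \<in> R" for l r
    using assms(1) that unfolding relS_def by (force intro: map_idI)+
  show ?thesis using assms(2)
  proof (elim UnE)
    assume "(b, c) \<in> pres_step R"
    then obtain u l r v where "b = u @ l @ v" "c = u @ r @ v" "(l, r) \<in> R"
      unfolding pres_step_def by blast
    then have "map f b = map f u @ l @ map f v" "map f c = map f u @ r @ map f v" "(l, r) \<in> R"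
      using ml by simp_all
    then show ?thesis unfolding pres_step_def by blast
  next
    assume "(b, c) \<in> (pres_step R)\<inverse>"
    then obtain u l r v where "c = u @ l @ v" "b = u @ r @ v" "(l, r) \<in> R"
      unfolding pres_step_def by blast
    then have "map f c = map f u @ l @ map f v" "map f b = map f u @ r @ map f v" "(l, r) \<in> R"
      using ml by simp_all
    then show ?thesis unfolding pres_step_def by blast
  qed
qed

lemma pres_eq_map:
  assumes "\<forall>x\<in>relS R. f x = x" and "pres_eq R a b"
  shows "pres_eq R (map f a) (map f b)"
  using assms(2) unfolding pres_eq_def
proof (induction rule: rtrancl_induct)
  case base then show ?case by simp
next
  case (step y z) then show ?case
    using step_map[OF assms(1) step(2)] by (meson rtrancl.rtrancl_into_rtrancl)
qed

theorem proposition4p4: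
  fixes X :: "'x set" and R :: "('x list \<times> 'x list) set"
  assumes "R \<subseteq> lists X \<times> lists X"
    and "finite {x \<in> X. \<exists>a \<in> lists X. \<exists>b \<in> lists X. \<exists>c \<in> lists X.
                 (a @ [x] @ b, c) \<in> R \<or> (c, a @ [x] @ b) \<in> R}"
  shows "((\<exists>a \<in> lists X. infinite (factZ X R a)) \<longleftrightarrow> (\<exists>a \<in> lists X. infinite (lenL X R a)))
       \<and> ((\<exists>a \<in> lists X. infinite (lenL X R a)) \<longleftrightarrow> (\<exists>k::nat. infinite (unionU X R k)))
       \<and> ((\<exists>k::nat. infinite (unionU X R k)) \<longleftrightarrow> (\<exists>k::nat. \<forall>n\<ge>k. infinite (unionU X R n)))"
proof -
  let ?S = "relS R"
  have SX: "?S \<subseteq> X" using assms(1) unfolding relS_def by auto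
  have finS: "finite ?S"
  proof (rule finite_subset[OF _ assms(2)])
    show "?S \<subseteq> {x \<in> X. \<exists>a \<in> lists X. \<exists>b \<in> lists X. \<exists>c \<in> lists X.
                 (a @ [x] @ b, c) \<in> R \<or> (c, a @ [x] @ b) \<in> R}"
    proof
      fix x assume "x \<in> ?S"
      then obtain l r where lr: "(l, r) \<in> R" "x \<in> set l \<or> x \<in> set r"
        unfolding relS_def by auto
      have lX: "l \<in> lists X" "r \<in> lists X" using lr(1) assms(1) by auto
      show "x \<in> {x \<in> X. \<exists>a \<in> lists X. \<exists>b \<in> lists X. \<exists>c \<in> lists X.
                 (a @ [x] @ b, c) \<in> R \<or> (c, a @ [x] @ b) \<in> R}"
        using lr(2)
      proof
        assume "x \<in> set l"
        then obtain u v where "l = u @ x # v" by (meson split_list)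
        then show ?thesis using lr(1) lX by auto
      next
        assume "x \<in> set r"
        then obtain u v where "r = u @ x # v" by (meson split_list)
        then show ?thesis using lr(1) lX by auto
      qed
    qed
  qed
  have Zfin: "finite (factZ X R a)" if "a \<in> lists X" and fl: "finite (lenL X R a)" for a
  proof -
    obtain N where N: "\<forall>m\<in>lenL X R a. m \<le> N"
      using fl finite_nat_set_iff_bounded_le by blast
    have "factZ X R a \<subseteq> {xs. set xs \<subseteq> set a \<union> ?S \<and> length xs \<le> N}"
    proof
      fix b assume b: "b \<in> factZ X R a"
      then have "pres_eq R a b" unfolding factZ_def by (auto intro: pres_eq_sym)
      then have "set b \<subseteq> set a \<union> ?S" by (rule pres_eq_set)
      moreover have "length b \<le> N" using N b unfolding lenL_def by auto
      ultimately show "b \<in> {xs. set xs \<subseteq> set a \<union> ?S \<and> length xs \<le> N}" by simp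
    qed
    then show ?thesis using finite_lists_length_le[of "set a \<union> ?S" N] finS
      by (meson finite_Un finite_set finite_subset)
  qed
  have A: "(\<exists>a \<in> lists X. infinite (factZ X R a)) \<longleftrightarrow> (\<exists>a \<in> lists X. infinite (lenL X R a))"
  proof
    assume "\<exists>a \<in> lists X. infinite (factZ X R a)"
    then obtain a where a: "a \<in> lists X" "infinite (factZ X R a)" by blast
    have "infinite (lenL X R a)" using Zfin[OF a(1)] a(2) by blast
    then show "\<exists>a \<in> lists X. infinite (lenL X R a)" using a(1) by blast
  next
    assume "\<exists>a \<in> lists X. infinite (lenL X R a)"
    then obtain a where a: "a \<in> lists X" "infinite (lenL X R a)" by blast
    have "infinite (factZ X R a)" using a(2) unfolding lenL_def using finite_imageI by blast
    then show "\<exists>a \<in> lists X. infinite (factZ X R a)" using a(1) by blast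
  qed
  have self: "length a \<in> lenL X R a" if "a \<in> lists X" for a
    using that pres_eq_refl unfolding lenL_def factZ_def by blast
  have B1: "infinite (unionU X R (length a))" if "a \<in> lists X" "infinite (lenL X R a)" for a
  proof -
    have "lenL X R a \<subseteq> unionU X R (length a)"
      unfolding unionU_def sysL_def using that self by blast
    then show ?thesis using that(2) by (meson finite_subset)
  qed
  define z where "z = (SOME z. z \<in> X - ?S)"
  define f where "f = (\<lambda>x. if x \<in> ?S then x else z)"
  have fS: "\<forall>x\<in>?S. f x = x" unfolding f_def by simp
  have fX: "map f b \<in> lists X" if "b \<in> lists X" for b
  proof -
    have "f x \<in> X" if "x \<in> X" for x
    proof (cases "x \<in> ?S")
      case True then show ?thesis using that f_def by simp
    next
      case False
      then have "z \<in> X - ?S" unfolding z_def using that by (metis Diff_iff someI)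
      then show ?thesis using False f_def by simp
    qed
    then show ?thesis using that by auto
  qed
  have fset: "set (map f b) \<subseteq> ?S \<union> {z}" for b unfolding f_def by auto
  have lenmono: "lenL X R c \<subseteq> lenL X R (map f c)" for c
  proof
    fix m assume "m \<in> lenL X R c"
    then obtain d where d: "d \<in> lists X" "pres_eq R d c" "m = length d"
      unfolding lenL_def factZ_def by auto
    then have "pres_eq R (map f d) (map f c)" using pres_eq_map[OF fS] by blast
    moreover have "map f d \<in> lists X" using d(1) fX by blast
    ultimately have "map f d \<in> factZ X R (map f c)" unfolding factZ_def by blast
    moreover have "m = length (map f d)" using d(3) by simp
    ultimately show "m \<in> lenL X R (map f c)" unfolding lenL_def by blast
  qed
  have B2: "\<exists>a \<in> lists X. infinite (lenL X R a)" if inf: "infinite (unionU X R k)" for k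
  proof (rule ccontr)
    assume H: "\<not> (\<exists>a \<in> lists X. infinite (lenL X R a))"
    let ?I = "(\<lambda>c. lenL X R (map f c)) ` {c \<in> lists X. length c = k}"
    have sub: "unionU X R k \<subseteq> \<Union> ?I"
    proof
      fix m assume "m \<in> unionU X R k"
      then obtain a where a: "a \<in> lists X" "k \<in> lenL X R a" "m \<in> lenL X R a"
        unfolding unionU_def sysL_def by auto
      obtain c where c: "c \<in> lists X" "pres_eq R c a" "k = length c"
        using a(2) unfolding lenL_def factZ_def by auto
      obtain d where d: "d \<in> lists X" "pres_eq R d a" "m = length d"
        using a(3) unfolding lenL_def factZ_def by auto
      have "pres_eq R d c" using c(2) d(2) by (meson pres_eq_sym pres_eq_trans)
      then have "m \<in> lenL X R c" using d unfolding lenL_def factZ_def by auto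
      then have "m \<in> lenL X R (map f c)" using lenmono by blast
      then show "m \<in> \<Union> ?I" using c by auto
    qed
    have "?I \<subseteq> (\<lambda>w. lenL X R w) ` {xs. set xs \<subseteq> ?S \<union> {z} \<and> length xs = k}"
      using fset by auto
    moreover have "finite {xs. set xs \<subseteq> ?S \<union> {z} \<and> length xs = k}"
      using finite_lists_length_eq[of "?S \<union> {z}" k] finS by simp
    ultimately have "finite ?I"
      by (meson finite_imageI finite_subset)
    moreover have "\<forall>L\<in>?I. finite L" using H fX by auto
    ultimately have "finite (\<Union> ?I)" by blast
    then have "finite (unionU X R k)" using sub by (rule finite_subset[rotated])
    then show False using inf by simp
  qed
  have C: "(\<exists>a \<in> lists X. infinite (lenL X R a)) \<longleftrightarrow> (\<exists>k::nat. infinite (unionU X R k))"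
    using B1 B2 by blast
  have D1: "\<exists>k::nat. \<forall>n\<ge>k. infinite (unionU X R n)"
    if "a \<in> lists X" and il: "infinite (lenL X R a)" for a
  proof -
    obtain m where m: "m \<in> lenL X R a" "m > 0"
    proof -
      have "\<not> lenL X R a \<subseteq> {0}"
      proof
        assume "lenL X R a \<subseteq> {0}"
        then have "finite (lenL X R a)" by (rule finite_subset) simp
        then show False using il by simp
      qed
      then show ?thesis using that by blast
    qed
    then obtain d where d: "d \<in> lists X" "length d > 0"
      unfolding lenL_def factZ_def by auto
    then obtain y where y: "y \<in> X" by (cases d) auto
    have "infinite (unionU X R n)" if n: "n \<ge> length a" for n
    proof -
      define w where "w = a @ replicate (n - length a) y"
      have wX: "w \<in> lists X" using y \<open>a \<in> lists X\<close> unfolding w_def by auto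
      have "(\<lambda>m. m + (n - length a)) ` lenL X R a \<subseteq> lenL X R w"
      proof
        fix m' assume "m' \<in> (\<lambda>m. m + (n - length a)) ` lenL X R a"
        then obtain e where e: "e \<in> lists X" "pres_eq R e a" "m' = length e + (n - length a)"
          unfolding lenL_def factZ_def by auto
        have "pres_eq R (e @ replicate (n - length a) y) w"
          using pres_eq_app[OF e(2)] unfolding w_def by blast
        moreover have "e @ replicate (n - length a) y \<in> lists X" using e(1) y by auto
        ultimately show "m' \<in> lenL X R w" using e(3) unfolding lenL_def factZ_def
          by (auto intro!: image_eqI[where x = "e @ replicate (n - length a) y"])
      qed
      moreover have "infinite ((\<lambda>m. m + (n - length a)) ` lenL X R a)"
      proof
        assume "finite ((\<lambda>m. m + (n - length a)) ` lenL X R a)"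
        moreover have "inj_on (\<lambda>m. m + (n - length a)) (lenL X R a)" by (simp add: inj_on_def)
        ultimately have "finite (lenL X R a)" by (rule finite_imageD)
        then show False using il by simp
      qed
      ultimately have "infinite (lenL X R w)" by (meson finite_subset)
      moreover have "length w = n" using n unfolding w_def by simp
      ultimately show ?thesis using B1[OF wX] by simp
    qed
    then show ?thesis by blast
  qed
  have E: "((\<exists>k::nat. infinite (unionU X R k)) \<longleftrightarrow> (\<exists>k::nat. \<forall>n\<ge>k. infinite (unionU X R n)))"
    using B2 D1 by blast
  show ?thesis using A C E by blast
qed

end
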